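(* Let $(L,d)$ be a metric locale without isolated points. If $L$ is extremally disconnected, then $L$ is Boolean (i.e. $a\vee a^*=1$ for every $a\in L$).
   Context: A frame (locale) $L$ is a complete lattice in which finite meets distribute over arbitrary joins; $a^*$ denotes the pseudocomplement of $a$ (largest $x$ with $x\wedge a=0$). $L$ is extremally disconnected if $a^*\vee a^{**}=1$ for all $a\in L$. A diameter on $L$ is a map $d\colon L\to[0,+\infty]$ with (D1) $d(0)=0$; (D2) $a\le b\Rightarrow d(a)\le d(b)$; (D3) $a\wedge b\neq 0\Rightarrow d(a\vee b)\le d(a)+d(b)$; (D4) for every $\varepsilon>0$, $\bigvee\{a\in L\mid d(a)<\varepsilon\}=1$. Write $b\lhd_\varepsilon a$ if for every $c\in L$ with $d(c)<\varepsilon$, $c\wedge b\ne0$ implies $c\le a$. The diameter is admissible if $a=\bigvee\{b\in L\mid b\lhd_\varepsilon a \text{ for some }\varepsilon>0\}$ for all $a\in L$; a metric locale is a pair $(L,d)$ with $d$ an admissible diameter. A sublocale of $L$ is a subset closed under arbitrary meets and such that $a\to s$ lies in it whenever $s$ does; the open sublocale of $a$ is $\mathfrak{o}(a)=\{a\to b\mid b\in L\}$. A point of $L$ is $p\ne1$ such that $a\wedge b\le p$ implies $a\le p$ or $b\le p$; it is isolated if the sublocale $\{1,p\}$ equals $\mathfrak{o}(a)$ for some $a\in L$. *)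

theory Defs
  imports "HOL-Analysis.Analysis"
begin

definition frame_law :: "('a::complete_lattice) itself \<Rightarrow> bool" where
  "frame_law _ \<longleftrightarrow> (\<forall>(a::'a) S. inf a (Sup S) = Sup ((\<lambda>s. inf a s) ` S))"

definition pcompl :: "'a::complete_lattice \<Rightarrow> 'a" where
  "pcompl a = Sup {x. inf x a = bot}"

definition fimp :: "'a::complete_lattice \<Rightarrow> 'a \<Rightarrow> 'a" where
  "fimp a b = Sup {x. inf x a \<le> b}"

definition extremally_disconnected :: "('a::complete_lattice) itself \<Rightarrow> bool" where
  "extremally_disconnected _ \<longleftrightarrow> (\<forall>a::'a. sup (pcompl a) (pcompl (pcompl a)) = top)"

definition boolean_frame :: "('a::complete_lattice) itself \<Rightarrow> bool" where
  "boolean_frame _ \<longleftrightarrow> (\<forall>a::'a. sup a (pcompl a) = top)"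

definition diameter :: "('a::complete_lattice \<Rightarrow> ennreal) \<Rightarrow> bool" where
  "diameter d \<longleftrightarrow>
     d bot = 0
   \<and> (\<forall>a b. a \<le> b \<longrightarrow> d a \<le> d b)
   \<and> (\<forall>a b. inf a b \<noteq> bot \<longrightarrow> d (sup a b) \<le> d a + d b)
   \<and> (\<forall>\<epsilon>::real. \<epsilon> > 0 \<longrightarrow> Sup {a. d a < ennreal \<epsilon>} = top)"

definition wbelow :: "('a::complete_lattice \<Rightarrow> ennreal) \<Rightarrow> real \<Rightarrow> 'a \<Rightarrow> 'a \<Rightarrow> bool" where
  "wbelow d \<epsilon> b a \<longleftrightarrow> (\<forall>c. d c < ennreal \<epsilon> \<longrightarrow> inf c b \<noteq> bot \<longrightarrow> c \<le> a)"

definition admissible :: "('a::complete_lattice \<Rightarrow> ennreal) \<Rightarrow> bool" where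
  "admissible d \<longleftrightarrow> (\<forall>a. a = Sup {b. \<exists>\<epsilon>>0. wbelow d \<epsilon> b a})"

definition metric_locale :: "('a::complete_lattice \<Rightarrow> ennreal) \<Rightarrow> bool" where
  "metric_locale d \<longleftrightarrow> frame_law TYPE('a) \<and> diameter d \<and> admissible d"

definition open_sublocale :: "'a::complete_lattice \<Rightarrow> 'a set" where
  "open_sublocale a = {fimp a b | b. True}"

definition is_point :: "'a::complete_lattice \<Rightarrow> bool" where
  "is_point p \<longleftrightarrow> p \<noteq> top \<and> (\<forall>a b. inf a b \<le> p \<longrightarrow> a \<le> p \<or> b \<le> p)"

definition isolated_point :: "'a::complete_lattice \<Rightarrow> bool" where
  "isolated_point p \<longleftrightarrow> is_point p \<and> (\<exists>a. {top, p} = open_sublocale a)"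

end

theory Submission
  imports Defs
begin


lemma fl: assumes "frame_law TYPE('a::complete_lattice)" shows "inf (x::'a) (Sup S) = (SUP s\<in>S. inf x s)"
  using assms unfolding frame_law_def by blast

lemma fl_sup: assumes "frame_law TYPE('a::complete_lattice)" shows "inf (x::'a) (sup y z) = sup (inf x y) (inf x z)"
  using fl[OF assms, of x "{y,z}"] by simp

lemma pc_upper: "inf y x = bot \<Longrightarrow> y \<le> pcompl x" unfolding pcompl_def by (rule Sup_upper) simp

lemma pc_inf: assumes FL: "frame_law TYPE('a::complete_lattice)" shows "inf (x::'a) (pcompl x) = bot"
proof -
  have "inf x (pcompl x) = (SUP s\<in>{y. inf y x = bot}. inf x s)" unfolding pcompl_def by (rule fl[OF FL])
  also have "... = bot" by (rule antisym) (auto intro!: SUP_least simp: inf_commute)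
  finally show ?thesis .
qed

lemma pc_le_iff: assumes FL: "frame_law TYPE('a::complete_lattice)" shows "(y::'a) \<le> pcompl x \<longleftrightarrow> inf y x = bot"
proof
  assume "y \<le> pcompl x"
  then have "inf y x \<le> inf x (pcompl x)" by (simp add: inf_commute le_infI2)
  then show "inf y x = bot" using pc_inf[OF FL] by (simp add: bot_unique)
qed (rule pc_upper)

lemma pc_anti: assumes FL: "frame_law TYPE('a::complete_lattice)" and "(x::'a) \<le> y" shows "pcompl y \<le> pcompl x"
proof -
  have "inf (pcompl y) x \<le> inf y (pcompl y)" using assms(2) by (simp add: inf_commute le_infI1)
  then show ?thesis using pc_inf[OF FL, of y] pc_le_iff[OF FL] bot_unique by metis
qed

lemma pc_pc: assumes FL: "frame_law TYPE('a::complete_lattice)" shows "(x::'a) \<le> pcompl (pcompl x)"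
  using pc_le_iff[OF FL] pc_inf[OF FL] by metis

lemma pc3: assumes FL: "frame_law TYPE('a::complete_lattice)" shows "pcompl (pcompl (pcompl (x::'a))) = pcompl x"
  by (meson FL antisym pc_anti pc_pc)

lemma pc_inf_pp: assumes FL: "frame_law TYPE('a::complete_lattice)"
  shows "inf (x::'a) (pcompl (pcompl y)) \<le> pcompl (pcompl (inf x y))"
proof -
  let ?z = "pcompl (inf x y)"
  have "inf (inf ?z x) y = bot" using pc_inf[OF FL, of "inf x y"] by (simp add: inf_commute inf_left_commute inf_assoc)
  then have "inf ?z x \<le> pcompl y" using pc_le_iff[OF FL] by blast
  then have "inf (inf ?z x) (pcompl (pcompl y)) = bot"
    by (metis FL bot_unique inf_commute inf_mono order_refl pc_inf)
  then have "inf (inf x (pcompl (pcompl y))) ?z = bot" by (simp add: inf_commute inf_left_commute)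
  then show ?thesis using pc_le_iff[OF FL] by blast
qed

lemma ed_disj: assumes FL: "frame_law TYPE('a::complete_lattice)" and ED: "extremally_disconnected TYPE('a)"
  and "inf (u::'a) v = bot" shows "sup (pcompl u) (pcompl v) = top"
proof -
  have "v \<le> pcompl u" using assms(3) pc_le_iff[OF FL] by (simp add: inf_commute)
  then have "inf (pcompl (pcompl u)) v = bot"
    by (metis FL bot_unique inf_commute inf_mono order_refl pc_inf)
  then have "pcompl (pcompl u) \<le> pcompl v" using pc_le_iff[OF FL] by blast
  moreover have "sup (pcompl u) (pcompl (pcompl u)) = top" using ED unfolding extremally_disconnected_def by blast
  ultimately show ?thesis by (metis sup_mono order_refl top_unique)
qed

lemma wbelow_mono: "wbelow d e b x \<Longrightarrow> e' \<le> e \<Longrightarrow> wbelow d e' b x"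
  unfolding wbelow_def using ennreal_leI less_le_trans by blast


lemma inf_Sup_le: assumes FL: "frame_law TYPE('a::complete_lattice)" and "\<And>s. s \<in> S \<Longrightarrow> inf (x::'a) s \<le> g"
  shows "inf x (Sup S) \<le> g"
  using fl[OF FL, of x S] assms(2) by (simp add: SUP_least)

lemma Sup_inf_bot: assumes FL: "frame_law TYPE('a::complete_lattice)"
  and "\<And>x y. x \<in> A \<Longrightarrow> y \<in> B \<Longrightarrow> inf (x::'a) y = bot"
  shows "inf (Sup A) (Sup B) = bot"
proof -
  have "inf (Sup B) (Sup A) \<le> bot"
  proof (rule inf_Sup_le[OF FL])
    fix x assume "x \<in> A"
    have "inf x (Sup B) \<le> bot" by (rule inf_Sup_le[OF FL]) (use assms(2) \<open>x \<in> A\<close> in simp)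
    then show "inf (Sup B) x \<le> bot" by (simp add: inf_commute)
  qed
  then show ?thesis by (simp add: inf_commute bot_unique)
qed



definition pU :: "(nat \<Rightarrow> 'a::complete_lattice) \<Rightarrow> 'a \<Rightarrow> 'a \<Rightarrow> 'a" where
  "pU g e p = (let M = (SOME M. inf p e \<le> g M);
                   M1 = (SOME M1. inf (inf p (pcompl (g M))) (g M1) \<noteq> bot)
               in inf (inf p (pcompl (g M))) (g M1))"

definition pV :: "(nat \<Rightarrow> 'a::complete_lattice) \<Rightarrow> 'a \<Rightarrow> 'a \<Rightarrow> 'a" where
  "pV g e p = (let M = (SOME M. inf p e \<le> g M);
                   M1 = (SOME M1. inf (inf p (pcompl (g M))) (g M1) \<noteq> bot);
                   M' = max M M1;
                   M2 = (SOME M2. inf (inf p (pcompl (g M'))) (g M2) \<noteq> bot)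
               in inf (inf p (pcompl (g M'))) (g M2))"

primrec EE :: "(nat \<Rightarrow> 'a::complete_lattice) \<Rightarrow> (nat \<Rightarrow> 'a set) \<Rightarrow> nat \<Rightarrow> 'a \<times> 'a" where
  "EE g P 0 = (bot, bot)"
| "EE g P (Suc k) = (let e = sup (fst (EE g P k)) (snd (EE g P k)) in
     (sup (fst (EE g P k)) (Sup (pU g e ` P k)), sup (snd (EE g P k)) (Sup (pV g e ` P k))))"

lemma piece:
  fixes g :: "nat \<Rightarrow> 'a::complete_lattice"
  assumes FL: "frame_law TYPE('a)"
    and mono: "\<And>i j. i \<le> j \<Longrightarrow> g i \<le> g j"
    and ex: "\<exists>M. inf p e \<le> g M"
    and nz: "\<And>M. \<exists>M1. inf (inf p (pcompl (g M))) (g M1) \<noteq> bot"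
  shows "pU g e p \<noteq> bot" "pV g e p \<noteq> bot" "pU g e p \<le> p" "pV g e p \<le> p"
    "inf (pU g e p) e = bot" "inf (pV g e p) e = bot" "inf (pU g e p) (pV g e p) = bot"
    "\<exists>M. pU g e p \<le> g M \<and> pV g e p \<le> g M"
proof -
  define M where "M = (SOME M. inf p e \<le> g M)"
  define M1 where "M1 = (SOME M1. inf (inf p (pcompl (g M))) (g M1) \<noteq> bot)"
  define M' where "M' = max M M1"
  define M2 where "M2 = (SOME M2. inf (inf p (pcompl (g M'))) (g M2) \<noteq> bot)"
  have hM: "inf p e \<le> g M" unfolding M_def using ex by (rule someI_ex)
  have h1: "inf (inf p (pcompl (g M))) (g M1) \<noteq> bot" unfolding M1_def using nz by (rule someI_ex)
  have h2: "inf (inf p (pcompl (g M'))) (g M2) \<noteq> bot" unfolding M2_def using nz by (rule someI_ex)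
  have U: "pU g e p = inf (inf p (pcompl (g M))) (g M1)" unfolding pU_def M_def M1_def Let_def ..
  have V: "pV g e p = inf (inf p (pcompl (g M'))) (g M2)" unfolding pV_def M_def M1_def M'_def M2_def Let_def ..
  have gM: "g M \<le> g M'" "g M1 \<le> g M'" using mono M'_def by auto
  show "pU g e p \<noteq> bot" "pV g e p \<noteq> bot" using h1 h2 U V by auto
  show "pU g e p \<le> p" "pV g e p \<le> p" using U V by (auto intro: le_infI1)
  have "inf (pU g e p) e \<le> inf (g M) (pcompl (g M))" unfolding U
  proof (rule le_infI)
    have "inf (inf (inf p (pcompl (g M))) (g M1)) e \<le> inf p e" by (auto intro: le_infI1)
    then show "inf (inf (inf p (pcompl (g M))) (g M1)) e \<le> g M" using hM by (rule order_trans)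
  qed (meson inf_le1 inf_le2 order_trans)
  then show "inf (pU g e p) e = bot" using pc_inf[OF FL] by (metis bot_unique)
  have "inf (pV g e p) e \<le> inf (g M') (pcompl (g M'))" unfolding V
  proof (rule le_infI)
    have "inf (inf (inf p (pcompl (g M'))) (g M2)) e \<le> inf p e" by (auto intro: le_infI1)
    then show "inf (inf (inf p (pcompl (g M'))) (g M2)) e \<le> g M'" using hM gM by (meson order_trans)
  qed (meson inf_le1 inf_le2 order_trans)
  then show "inf (pV g e p) e = bot" using pc_inf[OF FL] by (metis bot_unique)
  have "inf (pU g e p) (pV g e p) \<le> inf (g M') (pcompl (g M'))" unfolding U V
  proof (rule le_infI)
    have "inf (inf (inf p (pcompl (g M))) (g M1)) (inf (inf p (pcompl (g M'))) (g M2)) \<le> g M1" by (auto intro: le_infI1)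
    then show "inf (inf (inf p (pcompl (g M))) (g M1)) (inf (inf p (pcompl (g M'))) (g M2)) \<le> g M'" using gM by (meson order_trans)
  qed (meson inf_le1 inf_le2 order_trans)
  then show "inf (pU g e p) (pV g e p) = bot" using pc_inf[OF FL] by (metis bot_unique)
  have "pU g e p \<le> g (max M1 M2)" "pV g e p \<le> g (max M1 M2)" unfolding U V
    using mono[of M1 "max M1 M2"] mono[of M2 "max M1 M2"] by (auto intro: le_infI2)
  then show "\<exists>M. pU g e p \<le> g M \<and> pV g e p \<le> g M" by blast
qed



lemma main:
  fixes d :: "'a::complete_lattice \<Rightarrow> ennreal" and a :: 'a
  assumes FL: "frame_law TYPE('a)" and D: "diameter d" and AD: "admissible d"
    and ED: "extremally_disconnected TYPE('a)"
  shows "pcompl (pcompl a) \<le> a"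
proof -
  have D2: "\<And>x y. x \<le> y \<Longrightarrow> d x \<le> d y"
    and D3: "\<And>x y. inf x y \<noteq> bot \<Longrightarrow> d (sup x y) \<le> d x + d y"
    and D4: "\<And>\<epsilon>. \<epsilon> > 0 \<Longrightarrow> Sup {x. d x < ennreal \<epsilon>} = top"
    using D unfolding diameter_def by auto
  have ADM: "\<And>x. x = Sup {b. \<exists>\<epsilon>>0. wbelow d \<epsilon> b x}" using AD unfolding admissible_def by blast
  have EDx: "\<And>x::'a. sup (pcompl x) (pcompl (pcompl x)) = top"
    using ED unfolding extremally_disconnected_def by blast
  have fsup: "\<And>x y z::'a. inf x (sup y z) = sup (inf x y) (inf x z)" by (rule fl_sup[OF FL])
  define r where "r = (\<lambda>k::nat. 1 / real (Suc k))"
  have r_pos: "\<And>k. 0 < r k" unfolding r_def by simp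
  have r_anti: "\<And>k k'. k \<le> k' \<Longrightarrow> r k' \<le> r k" unfolding r_def by (simp add: frac_le)
  have r_small: "\<exists>k. 2 * r k \<le> \<epsilon>" if "0 < \<epsilon>" for \<epsilon>
  proof -
    obtain n :: nat where n: "2 / \<epsilon> < real n" using reals_Archimedean2 by blast
    then have "2 < \<epsilon> * real n" using that by (simp add: field_simps)
    then have "2 \<le> \<epsilon> * real (Suc n)" using that by (simp add: algebra_simps)
    then have "2 * r n \<le> \<epsilon>" unfolding r_def by (simp add: field_simps)
    then show ?thesis by blast
  qed
  define aa where "aa = pcompl (pcompl a)"
  define bad where "bad = (\<lambda>w. \<not> inf w aa \<le> a)"
  have bad_nz: "\<And>w. bad w \<Longrightarrow> w \<noteq> bot" unfolding bad_def by auto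
  define \<alpha> where "\<alpha> = (\<lambda>m. Sup {b. wbelow d (r m) b a})"
  define \<gamma> where "\<gamma> = (\<lambda>m. pcompl (pcompl (\<alpha> m)))"
  have \<alpha>_mono: "\<And>i j. i \<le> j \<Longrightarrow> \<alpha> i \<le> \<alpha> j"
    unfolding \<alpha>_def by (rule Sup_subset_mono) (auto intro: wbelow_mono r_anti)
  have \<gamma>_mono: "\<And>i j. i \<le> j \<Longrightarrow> \<gamma> i \<le> \<gamma> j"
    unfolding \<gamma>_def using \<alpha>_mono pc_anti[OF FL] by blast
  have a_le: "a \<le> Sup (range \<gamma>)"
  proof -
    have "Sup {b. \<exists>\<epsilon>>0. wbelow d \<epsilon> b a} \<le> Sup (range \<gamma>)"
    proof (rule Sup_least)
      fix b assume "b \<in> {b. \<exists>\<epsilon>>0. wbelow d \<epsilon> b a}"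
      then obtain \<epsilon> where e: "\<epsilon> > 0" "wbelow d \<epsilon> b a" by blast
      obtain k where "2 * r k \<le> \<epsilon>" using r_small e(1) by blast
      then have "r k \<le> \<epsilon>" using r_pos[of k] by linarith
      then have "wbelow d (r k) b a" using e(2) wbelow_mono by blast
      then have "b \<le> \<alpha> k" unfolding \<alpha>_def by (simp add: Sup_upper)
      also have "\<dots> \<le> \<gamma> k" unfolding \<gamma>_def by (rule pc_pc[OF FL])
      also have "\<dots> \<le> Sup (range \<gamma>)" by (simp add: Sup_upper)
      finally show "b \<le> Sup (range \<gamma>)" .
    qed
    then show ?thesis using ADM[of a] by simp
  qed
  have \<alpha>_rb: "sup a (pcompl (\<alpha> m)) = top" for m
  proof -
    have "Sup {c. d c < ennreal (r m)} \<le> sup a (pcompl (\<alpha> m))"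
    proof (rule Sup_least)
      fix c assume c: "c \<in> {c. d c < ennreal (r m)}"
      show "c \<le> sup a (pcompl (\<alpha> m))"
      proof (cases "inf c (\<alpha> m) = bot")
        case True
        then show ?thesis using pc_upper by (metis le_supI2)
      next
        case False
        then have "(SUP b\<in>{b. wbelow d (r m) b a}. inf c b) \<noteq> bot"
          unfolding \<alpha>_def using fl[OF FL] by metis
        then obtain b where "wbelow d (r m) b a" "inf c b \<noteq> bot"
          by (metis (no_types, lifting) SUP_bot_conv(2) mem_Collect_eq)
        then have "c \<le> a" using c unfolding wbelow_def by blast
        then show ?thesis by (rule le_supI1)
      qed
    qed
    then show ?thesis using D4[OF r_pos[of m]] by (simp add: top_unique)
  qed
  have \<gamma>_le: "\<gamma> m \<le> a" for m
  proof -
    have "\<gamma> m = inf (\<gamma> m) (sup a (pcompl (\<alpha> m)))" using \<alpha>_rb by simp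
    also have "\<dots> = sup (inf (\<gamma> m) a) (inf (\<gamma> m) (pcompl (\<alpha> m)))" by (rule fsup)
    also have "inf (\<gamma> m) (pcompl (\<alpha> m)) = bot" unfolding \<gamma>_def
      using pc_inf[OF FL, of "pcompl (\<alpha> m)"] by (simp add: inf_commute)
    finally show ?thesis by (metis inf_le2 sup_bot_right)
  qed
  have \<gamma>_reg: "pcompl (pcompl (\<gamma> m)) = \<gamma> m" for m
    unfolding \<gamma>_def using pc3[OF FL, of "pcompl (\<alpha> m)"] by simp
  have \<gamma>_comp: "sup (\<gamma> m) (pcompl (\<gamma> m)) = top" for m
    unfolding \<gamma>_def using pc3[OF FL, of "\<alpha> m"] EDx[of "\<alpha> m"] by (simp add: sup_commute)
  have NZ: "\<exists>M1. inf (inf \<phi> (pcompl (\<gamma> M))) (\<gamma> M1) \<noteq> bot" if bphi: "bad \<phi>" for \<phi> M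
  proof (rule ccontr)
    assume "\<not> ?thesis"
    then have all: "\<And>M1. inf (inf \<phi> (pcompl (\<gamma> M))) (\<gamma> M1) = bot" by blast
    have "inf (inf \<phi> (pcompl (\<gamma> M))) a \<le> inf (inf \<phi> (pcompl (\<gamma> M))) (Sup (range \<gamma>))"
      using a_le inf_mono by blast
    also have "\<dots> = bot" using fl[OF FL] all by (simp add: SUP_bot_conv)
    finally have z: "inf (inf \<phi> a) (pcompl (\<gamma> M)) = bot"
      by (simp add: bot_unique inf_commute inf_left_commute)
    have "inf \<phi> a = inf (inf \<phi> a) (sup (\<gamma> M) (pcompl (\<gamma> M)))" using \<gamma>_comp by simp
    also have "\<dots> = inf (inf \<phi> a) (\<gamma> M)" using fsup z by simp
    finally have "inf \<phi> a \<le> \<gamma> M" by (metis inf_le2)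
    then have "pcompl (pcompl (inf \<phi> a)) \<le> \<gamma> M" using pc_anti[OF FL] \<gamma>_reg by metis
    then have "inf \<phi> aa \<le> \<gamma> M" unfolding aa_def using pc_inf_pp[OF FL, of \<phi> a] by (rule_tac order_trans)
    then show False using bphi \<gamma>_le unfolding bad_def by (meson order_trans)
  qed
  define far where "far = (\<lambda>k x y. \<forall>c. d c < ennreal (r k) \<longrightarrow> inf c x \<noteq> bot \<longrightarrow> inf c y = bot)"
  define Fam where "Fam = (\<lambda>k. {F. F \<subseteq> {\<phi>. bad \<phi> \<and> d \<phi> < ennreal (r k)} \<and> pairwise (far k) F})"
  have zorn: "\<exists>M\<in>Fam k. \<forall>X\<in>Fam k. M \<subseteq> X \<longrightarrow> X = M" for k
  proof (rule Zorn_Lemma, rule ballI)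
    fix C assume C: "C \<in> chains (Fam k)"
    show "\<Union>C \<in> Fam k" unfolding Fam_def
    proof (intro CollectI conjI)
      show "\<Union>C \<subseteq> {\<phi>. bad \<phi> \<and> d \<phi> < ennreal (r k)}" using C unfolding chains_def Fam_def by blast
      show "pairwise (far k) (\<Union>C)" unfolding pairwise_def
      proof (intro ballI impI)
        fix x y assume x: "x \<in> \<Union>C" and y: "y \<in> \<Union>C" and xy: "x \<noteq> y"
        then obtain X Y where XY: "X \<in> C" "Y \<in> C" "x \<in> X" "y \<in> Y" by blast
        then have "X \<subseteq> Y \<or> Y \<subseteq> X" using C unfolding chains_def chain_subset_def by blast
        moreover have "pairwise (far k) X" "pairwise (far k) Y" using XY C unfolding chains_def Fam_def by blast+
        ultimately show "far k x y" using XY xy unfolding pairwise_def by blast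
      qed
    qed
  qed
  define \<Phi> where "\<Phi> = (\<lambda>k. SOME M. M \<in> Fam k \<and> (\<forall>X\<in>Fam k. M \<subseteq> X \<longrightarrow> X = M))"
  have \<Phi>_prop: "\<Phi> k \<in> Fam k \<and> (\<forall>X\<in>Fam k. \<Phi> k \<subseteq> X \<longrightarrow> X = \<Phi> k)" for k
    unfolding \<Phi>_def using zorn[of k] by (rule_tac someI_ex) blast
  have \<Phi>_bad: "bad \<phi> \<and> d \<phi> < ennreal (r k)" if "\<phi> \<in> \<Phi> k" for k \<phi>
    using \<Phi>_prop[of k] that unfolding Fam_def by blast
  have \<Phi>_one: "\<phi> = \<phi>'" if "\<phi> \<in> \<Phi> k" "\<phi>' \<in> \<Phi> k" "d \<psi> < ennreal (r k)" "inf \<psi> \<phi> \<noteq> bot" "inf \<psi> \<phi>' \<noteq> bot" for k \<phi> \<phi>' \<psi>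
  proof (rule ccontr)
    assume "\<phi> \<noteq> \<phi>'"
    then have "far k \<phi> \<phi>'" using \<Phi>_prop[of k] that(1,2) unfolding Fam_def pairwise_def by blast
    then show False using that(3-5) unfolding far_def by blast
  qed
  have \<Phi>_disj: "inf \<phi> \<phi>' = bot" if "\<phi> \<in> \<Phi> k" "\<phi>' \<in> \<Phi> k" "\<phi> \<noteq> \<phi>'" for k \<phi> \<phi>'
    using \<Phi>_one[OF that(1,2), of \<phi>] \<Phi>_bad[OF that(1)] bad_nz that(3) by auto
  have \<Phi>_max: "\<exists>\<phi>\<in>\<Phi> k. \<exists>c. d c < ennreal (r k) \<and> inf c \<psi> \<noteq> bot \<and> inf c \<phi> \<noteq> bot"
    if "bad \<psi>" "d \<psi> < ennreal (r k)" for k \<psi>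
  proof (cases "\<psi> \<in> \<Phi> k")
    case True
    then show ?thesis using that bad_nz[of \<psi>] by (intro bexI[of _ \<psi>] exI[of _ \<psi>]) auto
  next
    case False
    have "insert \<psi> (\<Phi> k) \<notin> Fam k" using \<Phi>_prop[of k] False by blast
    moreover have "insert \<psi> (\<Phi> k) \<subseteq> {\<phi>. bad \<phi> \<and> d \<phi> < ennreal (r k)}" using \<Phi>_bad that by blast
    ultimately have "\<not> pairwise (far k) (insert \<psi> (\<Phi> k))" unfolding Fam_def by blast
    moreover have "pairwise (far k) (\<Phi> k)" using \<Phi>_prop[of k] unfolding Fam_def by blast
    ultimately obtain \<phi> where "\<phi> \<in> \<Phi> k" "\<not> far k \<psi> \<phi> \<or> \<not> far k \<phi> \<psi>"
      unfolding pairwise_insert by blast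
    then show ?thesis unfolding far_def by (metis inf_commute) 
  qed
  have contain: "\<exists>k. \<exists>\<phi>\<in>\<Phi> k. \<phi> \<le> w" if bw: "bad w" for w
  proof -
    let ?B = "{b. \<exists>\<epsilon>>0. wbelow d \<epsilon> b w}"
    have "\<exists>b\<in>?B. \<not> inf b aa \<le> a"
    proof (rule ccontr)
      assume "\<not> ?thesis"
      then have "(SUP b\<in>?B. inf aa b) \<le> a" by (auto intro!: SUP_least simp: inf_commute)
      moreover have "inf w aa = (SUP b\<in>?B. inf aa b)" using fl[OF FL, of aa ?B] ADM[of w]
        by (simp add: inf_commute)
      ultimately show False using bw unfolding bad_def by simp
    qed
    then obtain b \<epsilon> where b: "\<epsilon> > 0" "wbelow d \<epsilon> b w" "\<not> inf b aa \<le> a" by blast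
    obtain k where k: "2 * r k \<le> \<epsilon>" using r_small b(1) by blast
    have "\<exists>c. d c < ennreal (r k) \<and> \<not> inf (inf c b) aa \<le> a"
    proof (rule ccontr)
      assume "\<not> ?thesis"
      then have "(SUP c\<in>{c. d c < ennreal (r k)}. inf (inf b aa) c) \<le> a"
        by (auto intro!: SUP_least simp: inf_commute inf_left_commute)
      moreover have "inf (inf b aa) (Sup {c. d c < ennreal (r k)}) = (SUP c\<in>{c. d c < ennreal (r k)}. inf (inf b aa) c)"
        by (rule fl[OF FL])
      ultimately show False using b(3) D4[OF r_pos[of k]] by simp
    qed
    then obtain c where c: "d c < ennreal (r k)" "\<not> inf (inf c b) aa \<le> a" by blast
    define \<psi> where "\<psi> = inf c b"
    have bpsi: "bad \<psi>" using c(2) unfolding bad_def \<psi>_def .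
    have dpsi: "d \<psi> < ennreal (r k)" using D2[of \<psi> c] c(1) unfolding \<psi>_def by simp
    obtain \<phi> c' where phi: "\<phi> \<in> \<Phi> k" "d c' < ennreal (r k)" "inf c' \<psi> \<noteq> bot" "inf c' \<phi> \<noteq> bot"
      using \<Phi>_max[OF bpsi dpsi] by blast
    have "d (sup c' \<phi>) \<le> d c' + d \<phi>" using D3 phi(4) by blast
    also have "\<dots> < ennreal (r k) + ennreal (r k)" using phi(2) \<Phi>_bad[OF phi(1)]
      by (simp add: add_strict_mono)
    also have "\<dots> \<le> ennreal \<epsilon>" using k r_pos[of k]
      by (metis ennreal_leI ennreal_plus less_eq_real_def mult_2)
    finally have dsum: "d (sup c' \<phi>) < ennreal \<epsilon>" .
    have "inf c' \<psi> \<le> inf (sup c' \<phi>) b" unfolding \<psi>_def by (auto intro: le_infI1 le_infI2)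
    then have "inf (sup c' \<phi>) b \<noteq> bot" using phi(3) by (metis bot_unique)
    then have "sup c' \<phi> \<le> w" using b(2) dsum unfolding wbelow_def by blast
    then show ?thesis using phi(1) by auto
  qed
  define EU where "EU = (\<lambda>k. fst (EE \<gamma> \<Phi> k))"
  define EV where "EV = (\<lambda>k. snd (EE \<gamma> \<Phi> k))"
  define E where "E = (\<lambda>k. sup (EU k) (EV k))"
  have EU0: "EU 0 = bot" "EV 0 = bot" unfolding EU_def EV_def by simp_all
  have EUS: "EU (Suc k) = sup (EU k) (Sup (pU \<gamma> (E k) ` \<Phi> k))"
    "EV (Suc k) = sup (EV k) (Sup (pV \<gamma> (E k) ` \<Phi> k))" for k
    unfolding EU_def EV_def E_def by (simp_all add: Let_def)
  have PF: "pU \<gamma> (E k) \<phi> \<noteq> bot \<and> pV \<gamma> (E k) \<phi> \<noteq> bot \<and> pU \<gamma> (E k) \<phi> \<le> \<phi> \<and> pV \<gamma> (E k) \<phi> \<le> \<phi>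
     \<and> inf (pU \<gamma> (E k) \<phi>) (E k) = bot \<and> inf (pV \<gamma> (E k) \<phi>) (E k) = bot
     \<and> inf (pU \<gamma> (E k) \<phi>) (pV \<gamma> (E k) \<phi>) = bot
     \<and> (\<exists>M. pU \<gamma> (E k) \<phi> \<le> \<gamma> M \<and> pV \<gamma> (E k) \<phi> \<le> \<gamma> M)"
    if loc: "\<forall>\<psi>. d \<psi> < ennreal (r k) \<longrightarrow> (\<exists>M. inf \<psi> (E k) \<le> \<gamma> M)" and ph: "\<phi> \<in> \<Phi> k" for k \<phi>
  proof -
    have ex: "\<exists>M. inf \<phi> (E k) \<le> \<gamma> M" using loc \<Phi>_bad[OF ph] by blast
    have nz: "\<And>M. \<exists>M1. inf (inf \<phi> (pcompl (\<gamma> M))) (\<gamma> M1) \<noteq> bot" using NZ \<Phi>_bad[OF ph] by blast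
    show ?thesis using piece[OF FL \<gamma>_mono ex nz] by blast
  qed
  have inv: "inf (EU k) (EV k) = bot \<and> (\<forall>\<psi>. d \<psi> < ennreal (r k) \<longrightarrow> (\<exists>M. inf \<psi> (E k) \<le> \<gamma> M))" for k
  proof (induct k)
    case 0
    then show ?case unfolding E_def EU0 by auto
  next
    case (Suc k)
    then have disj: "inf (EU k) (EV k) = bot" and loc: "\<forall>\<psi>. d \<psi> < ennreal (r k) \<longrightarrow> (\<exists>M. inf \<psi> (E k) \<le> \<gamma> M)"
      by blast+
    note pf = PF[OF loc]
    let ?SU = "Sup (pU \<gamma> (E k) ` \<Phi> k)"
    let ?SV = "Sup (pV \<gamma> (E k) ` \<Phi> k)"
    have EUE: "EU k \<le> E k" "EV k \<le> E k" unfolding E_def by simp_all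
    have d1: "inf (EU k) ?SV = bot"
    proof -
      have "inf (Sup {EU k}) ?SV = bot"
      proof (rule Sup_inf_bot[OF FL])
        fix x y assume "x \<in> {EU k}" "y \<in> pV \<gamma> (E k) ` \<Phi> k"
        then obtain \<phi> where p: "\<phi> \<in> \<Phi> k" "y = pV \<gamma> (E k) \<phi>" "x = EU k" by blast
        have "inf x y \<le> inf (pV \<gamma> (E k) \<phi>) (E k)" unfolding p(2,3) by (meson EUE(1) inf_le1 inf_le2 le_infI order_trans)
        then show "inf x y = bot" using pf[OF p(1)] by (simp add: bot_unique)
      qed
      then show ?thesis by simp
    qed
    have d2: "inf ?SU (EV k) = bot"
    proof -
      have "inf ?SU (Sup {EV k}) = bot"
      proof (rule Sup_inf_bot[OF FL])
        fix x y assume "y \<in> {EV k}" "x \<in> pU \<gamma> (E k) ` \<Phi> k"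
        then obtain \<phi> where p: "\<phi> \<in> \<Phi> k" "x = pU \<gamma> (E k) \<phi>" "y = EV k" by blast
        have "inf x y \<le> inf (pU \<gamma> (E k) \<phi>) (E k)" unfolding p(2,3) by (meson EUE(2) inf_le1 inf_le2 le_infI order_trans)
        then show "inf x y = bot" using pf[OF p(1)] by (simp add: bot_unique)
      qed
      then show ?thesis by simp
    qed
    have d3: "inf ?SU ?SV = bot"
    proof (rule Sup_inf_bot[OF FL])
      fix x y assume "x \<in> pU \<gamma> (E k) ` \<Phi> k" "y \<in> pV \<gamma> (E k) ` \<Phi> k"
      then obtain \<phi> \<phi>' where p: "\<phi> \<in> \<Phi> k" "\<phi>' \<in> \<Phi> k" "x = pU \<gamma> (E k) \<phi>" "y = pV \<gamma> (E k) \<phi>'" by blast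
      show "inf x y = bot"
      proof (cases "\<phi> = \<phi>'")
        case True
        then show ?thesis using pf[OF p(1)] p by simp
      next
        case False
        have "inf x y \<le> inf \<phi> \<phi>'" using pf[OF p(1)] pf[OF p(2)] p by (meson inf_mono)
        then show ?thesis using \<Phi>_disj[OF p(1,2) False] by (simp add: bot_unique)
      qed
    qed
    have A: "inf (EU (Suc k)) (EV (Suc k)) = bot"
      unfolding EUS fsup inf_commute[of "sup _ _"] using disj d1 d2 d3 by (simp add: inf_commute)
    have B: "\<exists>M. inf \<psi> (E (Suc k)) \<le> \<gamma> M" if dpsi: "d \<psi> < ennreal (r (Suc k))" for \<psi>
    proof -
      have dpsi': "d \<psi> < ennreal (r k)" using dpsi r_anti[of k "Suc k"]
        by (meson ennreal_leI le_SucI order_refl order_less_le_trans)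
      obtain M0 where M0: "inf \<psi> (E k) \<le> \<gamma> M0" using loc dpsi' by blast
      have "\<exists>M1. \<forall>\<phi>\<in>\<Phi> k. inf \<psi> (pU \<gamma> (E k) \<phi>) \<le> \<gamma> M1 \<and> inf \<psi> (pV \<gamma> (E k) \<phi>) \<le> \<gamma> M1"
      proof (cases "\<exists>\<phi>0\<in>\<Phi> k. inf \<psi> \<phi>0 \<noteq> bot")
        case True
        then obtain \<phi>0 where p0: "\<phi>0 \<in> \<Phi> k" "inf \<psi> \<phi>0 \<noteq> bot" by blast
        obtain M1 where M1: "pU \<gamma> (E k) \<phi>0 \<le> \<gamma> M1" "pV \<gamma> (E k) \<phi>0 \<le> \<gamma> M1" using pf[OF p0(1)] by blast
        show ?thesis
        proof (intro exI ballI)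
          fix \<phi> assume ph: "\<phi> \<in> \<Phi> k"
          show "inf \<psi> (pU \<gamma> (E k) \<phi>) \<le> \<gamma> M1 \<and> inf \<psi> (pV \<gamma> (E k) \<phi>) \<le> \<gamma> M1"
          proof (cases "\<phi> = \<phi>0")
            case True
            then show ?thesis using M1 by (auto intro: le_infI2)
          next
            case False
            then have "inf \<psi> \<phi> = bot" using \<Phi>_one[OF ph p0(1) dpsi'] p0(2) by blast
            moreover have "inf \<psi> (pU \<gamma> (E k) \<phi>) \<le> inf \<psi> \<phi>" "inf \<psi> (pV \<gamma> (E k) \<phi>) \<le> inf \<psi> \<phi>"
              using pf[OF ph] by (meson inf_mono order_refl)+
            ultimately show ?thesis by (simp add: bot_unique)
          qed
        qed
      next
        case False
        show ?thesis
        proof (intro exI ballI)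
          fix \<phi> assume ph: "\<phi> \<in> \<Phi> k"
          have "inf \<psi> (pU \<gamma> (E k) \<phi>) \<le> inf \<psi> \<phi>" "inf \<psi> (pV \<gamma> (E k) \<phi>) \<le> inf \<psi> \<phi>"
            using pf[OF ph] by (meson inf_mono order_refl)+
          then show "inf \<psi> (pU \<gamma> (E k) \<phi>) \<le> \<gamma> 0 \<and> inf \<psi> (pV \<gamma> (E k) \<phi>) \<le> \<gamma> 0"
            using False ph by (metis bot_least order_trans)
        qed
      qed
      then obtain M1 where M1: "\<And>\<phi>. \<phi> \<in> \<Phi> k \<Longrightarrow> inf \<psi> (pU \<gamma> (E k) \<phi>) \<le> \<gamma> M1 \<and> inf \<psi> (pV \<gamma> (E k) \<phi>) \<le> \<gamma> M1"
        by blast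
      let ?M = "max M0 M1"
      have g0: "\<gamma> M0 \<le> \<gamma> ?M" "\<gamma> M1 \<le> \<gamma> ?M" using \<gamma>_mono by simp_all
      have s1: "inf \<psi> ?SU \<le> \<gamma> ?M"
      proof (rule inf_Sup_le[OF FL])
        fix s assume "s \<in> pU \<gamma> (E k) ` \<Phi> k"
        then obtain \<phi> where "\<phi> \<in> \<Phi> k" "s = pU \<gamma> (E k) \<phi>" by blast
        then show "inf \<psi> s \<le> \<gamma> ?M" using M1 g0(2) by (meson order_trans)
      qed
      have s2: "inf \<psi> ?SV \<le> \<gamma> ?M"
      proof (rule inf_Sup_le[OF FL])
        fix s assume "s \<in> pV \<gamma> (E k) ` \<Phi> k"
        then obtain \<phi> where "\<phi> \<in> \<Phi> k" "s = pV \<gamma> (E k) \<phi>" by blast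
        then show "inf \<psi> s \<le> \<gamma> ?M" using M1 g0(2) by (meson order_trans)
      qed
      have s3: "inf \<psi> (EU k) \<le> \<gamma> ?M" "inf \<psi> (EV k) \<le> \<gamma> ?M"
        using M0 g0 EUE by (meson inf_mono order_refl order_trans)+
      have "inf \<psi> (E (Suc k)) = sup (sup (inf \<psi> (EU k)) (inf \<psi> ?SU)) (sup (inf \<psi> (EV k)) (inf \<psi> ?SV))"
        unfolding E_def EUS by (simp add: fsup)
      then show ?thesis using s1 s2 s3 by (metis le_supI)
    qed
    show ?case using A B by blast
  qed
  have EU_mono: "EU i \<le> EU j" "EV i \<le> EV j" if "i \<le> j" for i j
    using lift_Suc_mono_le[of EU, OF _ that] lift_Suc_mono_le[of EV, OF _ that] EUS by simp_all
  define U where "U = Sup (range EU)"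
  define V where "V = Sup (range EV)"
  have UV: "inf U V = bot" unfolding U_def V_def
  proof (rule Sup_inf_bot[OF FL])
    fix x y assume "x \<in> range EU" "y \<in> range EV"
    then obtain i j where ij: "x = EU i" "y = EV j" by blast
    have "inf x y \<le> inf (EU (max i j)) (EV (max i j))" unfolding ij using EU_mono[of i "max i j"] EU_mono[of j "max i j"] by (meson inf_mono max.cobounded1 max.cobounded2)
    then show "inf x y = bot" using inv[of "max i j"] by (simp add: bot_unique)
  qed
  have top: "sup (pcompl U) (pcompl V) = top" by (rule ed_disj[OF FL ED UV])
  have Uin: "pU \<gamma> (E k) \<phi> \<le> U" "pV \<gamma> (E k) \<phi> \<le> V" if "\<phi> \<in> \<Phi> k" for k \<phi>
  proof -
    have "pU \<gamma> (E k) \<phi> \<le> EU (Suc k)" "pV \<gamma> (E k) \<phi> \<le> EV (Suc k)" unfolding EUS using that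
      by (auto intro: le_supI2 Sup_upper)
    moreover have "EU (Suc k) \<le> U" "EV (Suc k) \<le> V" unfolding U_def V_def by (auto intro: Sup_upper)
    ultimately show "pU \<gamma> (E k) \<phi> \<le> U" "pV \<gamma> (E k) \<phi> \<le> V" by (meson order_trans)+
  qed
  have hU: "inf aa (pcompl U) \<le> a"
  proof (rule ccontr)
    assume nle: "\<not> ?thesis"
    have "bad (inf aa (pcompl U))" unfolding bad_def using nle
      by (metis inf.absorb_iff1 inf_le1)
    then obtain k \<phi> where ph: "\<phi> \<in> \<Phi> k" "\<phi> \<le> inf aa (pcompl U)" using contain by blast
    have p: "pU \<gamma> (E k) \<phi> \<noteq> bot" "pU \<gamma> (E k) \<phi> \<le> \<phi>" using PF[OF conjunct2[OF inv[of k]] ph(1)] by blast+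
    have "pU \<gamma> (E k) \<phi> \<le> pcompl U" using p(2) ph(2) by (meson le_infE order_trans)
    then have "pU \<gamma> (E k) \<phi> \<le> inf U (pcompl U)" using Uin[OF ph(1)] by simp
    then show False using p(1) pc_inf[OF FL, of U] by (simp add: bot_unique)
  qed
  have hV: "inf aa (pcompl V) \<le> a"
  proof (rule ccontr)
    assume nle: "\<not> ?thesis"
    have "bad (inf aa (pcompl V))" unfolding bad_def using nle
      by (metis inf.absorb_iff1 inf_le1)
    then obtain k \<phi> where ph: "\<phi> \<in> \<Phi> k" "\<phi> \<le> inf aa (pcompl V)" using contain by blast
    have p: "pV \<gamma> (E k) \<phi> \<noteq> bot" "pV \<gamma> (E k) \<phi> \<le> \<phi>" using PF[OF conjunct2[OF inv[of k]] ph(1)] by blast+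
    have "pV \<gamma> (E k) \<phi> \<le> pcompl V" using p(2) ph(2) by (meson le_infE order_trans)
    then have "pV \<gamma> (E k) \<phi> \<le> inf V (pcompl V)" using Uin[OF ph(1)] by simp
    then show False using p(1) pc_inf[OF FL, of V] by (simp add: bot_unique)
  qed
  have "aa = inf aa (sup (pcompl U) (pcompl V))" using top by simp
  also have "\<dots> = sup (inf aa (pcompl U)) (inf aa (pcompl V))" by (rule fsup)
  finally have "aa = sup (inf aa (pcompl U)) (inf aa (pcompl V))" .
  then have "aa \<le> a" using hU hV by (metis le_supI)
  then show ?thesis unfolding aa_def .
qed


theorem corollary5p7:
  fixes d :: "'a::complete_lattice \<Rightarrow> ennreal"
  assumes "metric_locale d"
    and "\<forall>p::'a. \<not> isolated_point p"
    and "extremally_disconnected TYPE('a)"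
  shows "boolean_frame TYPE('a)"
  unfolding boolean_frame_def
proof
  fix a :: 'a
  have FL: "frame_law TYPE('a)" and D: "diameter d" and AD: "admissible d"
    using assms(1) unfolding metric_locale_def by auto
  have le: "pcompl (pcompl a) \<le> a" by (rule main[OF FL D AD assms(3)])
  have "sup (pcompl a) (pcompl (pcompl a)) = top"
    using assms(3) unfolding extremally_disconnected_def by blast
  then have "top \<le> sup a (pcompl a)" using le by (metis sup.mono sup_commute order_refl)
  then show "sup a (pcompl a) = top" by (simp add: top_unique)
qed

end
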